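(* In the deterministic generalized top-$k$ selective gossip setting described in the context (with $G$ connected), let $\{a,b\}\in E$. Then for every candidate $j\notin S^\infty_{ab}$ and every agent $i\in[m]$, $X_{ij}(\infty)\le\alpha_{ab}$.
   Context: Fix integers $m\ge2$, $n\ge1$, $k\in[n]$. For $v\in\mathbb{R}^n$ let $\sigma$ be a permutation of $[n]$ with $v_{\sigma(1)}\ge\cdots\ge v_{\sigma(n)}$ and set $T_k(v)=\{j\in[n]: v_j\ge v_{\sigma(k)}\}$ (so $|T_k(v)|\ge k$). Let $\{i_1(t),i_2(t)\}_{t\ge0}$ be a deterministic sequence of unordered pairs of distinct agents in $[m]$, and let $E$ be the set of pairs $\{a,b\}$ with $\{i_1(t),i_2(t)\}=\{a,b\}$ for infinitely many $t$; assume the graph $G=([m],E)$ is connected. Let $X(0)\in\mathbb{R}^{m\times n}$ and define $X(t)$ by: $S(t)=T_k(X_{i_1(t)}(t))\cup T_k(X_{i_2(t)}(t))$ (where $X_i(t)$ is row $i$), $X_{ij}(t+1)=\tfrac12(X_{i_1(t)j}(t)+X_{i_2(t)j}(t))$ if $i\in\{i_1(t),i_2(t)\}$ and $j\in S(t)$, and $X_{ij}(t+1)=X_{ij}(t)$ otherwise. The limit $X(\infty)=\lim_{t\to\infty}X(t)$ exists. For $\{a,b\}\in E$ let $\beta_{ab}(s)$ be the $s$-th time $t$ with $\{i_1(t),i_2(t)\}=\{a,b\}$, let $S^\infty_{ab}=\bigcap_{t\ge0}\bigcup_{s\ge t}S(\beta_{ab}(s))$ be the set of candidates discussed by $a,b$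 infinitely often, and $\alpha_{ab}=\min_{j\in S^\infty_{ab}}X_{aj}(\infty)$ (which also equals $\min_{j\in S^\infty_{ab}}X_{bj}(\infty)$). *)

theory Defs
  imports "HOL-Combinatorics.Permutations" "HOL-Library.Infinite_Set" Complex_Main
begin

text \<open>Agents are indexed by {..<m}, candidates by {..<n} (0-based).
  A vector v in R^n is a function nat => real, only values on {..<n} matter.\<close>

definition sorts_desc :: "nat \<Rightarrow> (nat \<Rightarrow> real) \<Rightarrow> (nat \<Rightarrow> nat) \<Rightarrow> bool" where
  "sorts_desc n v \<sigma> \<longleftrightarrow> \<sigma> permutes {..<n} \<and>
     (\<forall>a b. a \<le> b \<and> b < n \<longrightarrow> v (\<sigma> b) \<le> v (\<sigma> a))"

text \<open>T_k(v) = {j in [n]. v_j >= v_(sigma(k))}, with k in {1..n} (1-based position,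
  hence index k-1 for the 0-based permutation).\<close>
definition topk :: "nat \<Rightarrow> nat \<Rightarrow> (nat \<Rightarrow> real) \<Rightarrow> nat set" where
  "topk n k v = {j \<in> {..<n}. v ((SOME \<sigma>. sorts_desc n v \<sigma>) (k - 1)) \<le> v j}"

primrec gossip :: "nat \<Rightarrow> nat \<Rightarrow> (nat \<Rightarrow> nat \<Rightarrow> real) \<Rightarrow> (nat \<Rightarrow> nat) \<Rightarrow> (nat \<Rightarrow> nat)
                   \<Rightarrow> nat \<Rightarrow> nat \<Rightarrow> nat \<Rightarrow> real" where
  "gossip n k X0 i1 i2 0 = X0"
| "gossip n k X0 i1 i2 (Suc t) =
     (let Y = gossip n k X0 i1 i2 t;
          S = topk n k (Y (i1 t)) \<union> topk n k (Y (i2 t))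
      in (\<lambda>i j. if (i = i1 t \<or> i = i2 t) \<and> j \<in> S
                 then (Y (i1 t) j + Y (i2 t) j) / 2 else Y i j))"

definition gossip_S :: "nat \<Rightarrow> nat \<Rightarrow> (nat \<Rightarrow> nat \<Rightarrow> real) \<Rightarrow> (nat \<Rightarrow> nat) \<Rightarrow> (nat \<Rightarrow> nat)
                   \<Rightarrow> nat \<Rightarrow> nat set" where
  "gossip_S n k X0 i1 i2 t =
     topk n k (gossip n k X0 i1 i2 t (i1 t)) \<union> topk n k (gossip n k X0 i1 i2 t (i2 t))"

definition edges_inf :: "(nat \<Rightarrow> nat) \<Rightarrow> (nat \<Rightarrow> nat) \<Rightarrow> nat set set" where
  "edges_inf i1 i2 = {e. infinite {t. {i1 t, i2 t} = e}}"

definition connected_graph :: "nat \<Rightarrow> nat set set \<Rightarrow> bool" where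
  "connected_graph m E \<longleftrightarrow>
     (\<forall>a<m. \<forall>b<m. (a, b) \<in> ({(x, y). {x, y} \<in> E})\<^sup>*)"

text \<open>beta_ab(s): the s-th (0-based) time the pair {a,b} is activated.\<close>
definition beta :: "(nat \<Rightarrow> nat) \<Rightarrow> (nat \<Rightarrow> nat) \<Rightarrow> nat \<Rightarrow> nat \<Rightarrow> nat \<Rightarrow> nat" where
  "beta i1 i2 a b = enumerate {t. {i1 t, i2 t} = {a, b}}"

definition S_inf :: "nat \<Rightarrow> nat \<Rightarrow> (nat \<Rightarrow> nat \<Rightarrow> real) \<Rightarrow> (nat \<Rightarrow> nat) \<Rightarrow> (nat \<Rightarrow> nat)
                   \<Rightarrow> nat \<Rightarrow> nat \<Rightarrow> nat set" where
  "S_inf n k X0 i1 i2 a b =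
     (\<Inter>t. \<Union>s\<in>{t..}. gossip_S n k X0 i1 i2 (beta i1 i2 a b s))"

end

theory Submission
  imports Defs
begin

lemma sorts_desc_ex: "\<exists>\<sigma>. sorts_desc n v \<sigma>"
proof -
  define xs where "xs = sort_key (\<lambda>j. - v j) [0..<n]"
  have "mset xs = mset [0..<n]" by (simp add: xs_def)
  then obtain p where p: "p permutes {..<length [0..<n]}" "permute_list p [0..<n] = xs"
    by (rule mset_eq_permutation)
  have pn: "p permutes {..<n}" using p(1) by simp
  have len: "length xs = n" by (simp add: xs_def)
  have xsp: "xs ! i = p i" if "i < n" for i
  proof -
    have "p i < n" using pn that permutes_in_image by fastforce
    then show ?thesis using p(2)[symmetric] that by (simp add: permute_list_def)
  qed
  have s: "sorted (map (\<lambda>j. - v j) xs)" by (simp add: xs_def)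
  have "v (p b) \<le> v (p a)" if "a \<le> b" "b < n" for a b
  proof -
    have "(map (\<lambda>j. - v j) xs) ! a \<le> (map (\<lambda>j. - v j) xs) ! b"
      using sorted_nth_mono[OF s, of a b] that len by simp
    then show ?thesis using that len xsp by simp
  qed
  then show ?thesis using pn unfolding sorts_desc_def by blast
qed

definition kth :: "nat \<Rightarrow> nat \<Rightarrow> (nat \<Rightarrow> real) \<Rightarrow> real" where
  "kth n k v = v ((SOME \<sigma>. sorts_desc n v \<sigma>) (k - 1))"

lemma topk_eq: "topk n k v = {j \<in> {..<n}. kth n k v \<le> v j}"
  unfolding topk_def kth_def by simp

lemma kth_props:
  assumes "1 \<le> k" "k \<le> n"
  shows "k \<le> card {j \<in> {..<n}. kth n k v \<le> v j}"
    and "card {j \<in> {..<n}. kth n k v < v j} < k"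
proof -
  define \<sigma> where "\<sigma> = (SOME \<sigma>. sorts_desc n v \<sigma>)"
  have sd: "sorts_desc n v \<sigma>" unfolding \<sigma>_def using sorts_desc_ex by (rule someI_ex)
  have pn: "\<sigma> permutes {..<n}" and mono: "\<And>a b. a \<le> b \<Longrightarrow> b < n \<Longrightarrow> v (\<sigma> b) \<le> v (\<sigma> a)"
    using sd unfolding sorts_desc_def by auto
  have th: "kth n k v = v (\<sigma> (k-1))" unfolding kth_def \<sigma>_def by simp
  have inj: "inj \<sigma>" using pn permutes_inj by blast
  have "\<sigma> ` {..<k} \<subseteq> {j \<in> {..<n}. kth n k v \<le> v j}"
  proof
    fix j assume "j \<in> \<sigma> ` {..<k}"
    then obtain b where b: "b < k" "j = \<sigma> b" by auto
    have "\<sigma> b < n" using b assms pn permutes_in_image by fastforce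
    moreover have "v (\<sigma> (k-1)) \<le> v (\<sigma> b)" using mono[of b "k-1"] b assms by simp
    ultimately show "j \<in> {j \<in> {..<n}. kth n k v \<le> v j}" using b th by simp
  qed
  moreover have "card (\<sigma> ` {..<k}) = k" using inj by (simp add: card_image inj_on_subset)
  ultimately show "k \<le> card {j \<in> {..<n}. kth n k v \<le> v j}"
    by (metis (no_types, lifting) card_mono finite_lessThan finite_subset mem_Collect_eq subsetI)
  have "{j \<in> {..<n}. kth n k v < v j} \<subseteq> \<sigma> ` {..<k-1}"
  proof
    fix j assume j: "j \<in> {j \<in> {..<n}. kth n k v < v j}"
    then have "j \<in> \<sigma> ` {..<n}" using permutes_image[OF pn] by auto
    then obtain b where b: "b < n" "j = \<sigma> b" by auto
    have "b < k - 1"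
    proof (rule ccontr)
      assume "\<not> b < k - 1"
      then have "v (\<sigma> b) \<le> v (\<sigma> (k-1))" using mono b by simp
      then show False using j b th by simp
    qed
    then show "j \<in> \<sigma> ` {..<k-1}" using b by auto
  qed
  then have "card {j \<in> {..<n}. kth n k v < v j} \<le> card (\<sigma> ` {..<k-1})"
    by (intro card_mono) auto
  also have "\<dots> \<le> k - 1" using card_image_le[of "{..<k-1}" \<sigma>] by simp
  finally show "card {j \<in> {..<n}. kth n k v < v j} < k" using assms by simp
qed


lemma L2:
  assumes k: "1 \<le> k" "k \<le> n"
    and conv: "\<forall>l<n. ((\<lambda>t. v t l) \<longlongrightarrow> x l) F"
    and j: "j < n" "x j < kth n k x"
  shows "eventually (\<lambda>t. j \<notin> topk n k (v t)) F"
proof -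
  define C where "C = {l \<in> {..<n}. kth n k x \<le> x l}"
  have fC: "finite C" unfolding C_def by simp
  have "\<forall>l\<in>C. eventually (\<lambda>t. v t j < v t l) F"
  proof
    fix l assume l: "l \<in> C"
    have "((\<lambda>t. v t l - v t j) \<longlongrightarrow> x l - x j) F"
      using conv l j unfolding C_def by (auto intro: tendsto_diff)
    moreover have "x l - x j > 0" using l j unfolding C_def by auto
    ultimately have "eventually (\<lambda>t. v t l - v t j > 0) F" by (rule order_tendstoD)
    then show "eventually (\<lambda>t. v t j < v t l) F" by (rule eventually_mono) simp
  qed
  then have ev: "eventually (\<lambda>t. \<forall>l\<in>C. v t j < v t l) F" by (rule eventually_ball_finite[OF fC])
  show ?thesis
  proof (rule eventually_mono[OF ev], rule notI)
    fix t assume all: "\<forall>l\<in>C. v t j < v t l" and jt: "j \<in> topk n k (v t)"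
    have "C \<subseteq> {l \<in> {..<n}. kth n k (v t) < v t l}"
      using all jt unfolding topk_eq C_def by fastforce
    then have "card C \<le> card {l \<in> {..<n}. kth n k (v t) < v t l}" by (intro card_mono) auto
    moreover have "k \<le> card C" unfolding C_def by (rule kth_props(1)[OF k])
    moreover have "card {l \<in> {..<n}. kth n k (v t) < v t l} < k" by (rule kth_props(2)[OF k])
    ultimately show False by simp
  qed
qed

lemma L1:
  assumes k: "1 \<le> k" "k \<le> n"
    and conv: "\<forall>l<n. ((\<lambda>t. v t l) \<longlongrightarrow> x l) F"
    and j: "j < n" "kth n k x < x j"
  shows "eventually (\<lambda>t. j \<in> topk n k (v t)) F"
proof -
  define D where "D = {l \<in> {..<n}. kth n k x < x l}"
  have fD: "finite ({..<n} - D)" by simp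
  have "\<forall>l\<in>{..<n} - D. eventually (\<lambda>t. v t l < v t j) F"
  proof
    fix l assume l: "l \<in> {..<n} - D"
    have "((\<lambda>t. v t j - v t l) \<longlongrightarrow> x j - x l) F"
      using conv l j by (auto intro: tendsto_diff)
    moreover have "x j - x l > 0" using l j unfolding D_def by auto
    ultimately have "eventually (\<lambda>t. v t j - v t l > 0) F" by (rule order_tendstoD)
    then show "eventually (\<lambda>t. v t l < v t j) F" by (rule eventually_mono) simp
  qed
  then have ev: "eventually (\<lambda>t. \<forall>l\<in>{..<n} - D. v t l < v t j) F" by (rule eventually_ball_finite[OF fD])
  show ?thesis
  proof (rule eventually_mono[OF ev], rule ccontr)
    fix t assume all: "\<forall>l\<in>{..<n} - D. v t l < v t j" and jt: "j \<notin> topk n k (v t)"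
    have "{l \<in> {..<n}. kth n k (v t) \<le> v t l} \<subseteq> D"
    proof
      fix l assume l: "l \<in> {l \<in> {..<n}. kth n k (v t) \<le> v t l}"
      have "v t j < kth n k (v t)" using jt j unfolding topk_eq by auto
      show "l \<in> D"
      proof (rule ccontr)
        assume "l \<notin> D"
        then have "v t l < v t j" using all l by auto
        then show False using \<open>v t j < kth n k (v t)\<close> l by auto
      qed
    qed
    then have "card {l \<in> {..<n}. kth n k (v t) \<le> v t l} \<le> card D" by (intro card_mono) (auto simp: D_def)
    moreover have "k \<le> card {l \<in> {..<n}. kth n k (v t) \<le> v t l}" by (rule kth_props(1)[OF k])
    moreover have "card D < k" unfolding D_def by (rule kth_props(2)[OF k])
    ultimately show False by simp
  qed
qed

lemma A_char:
  fixes n :: nat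
  assumes "\<forall>s. S s \<subseteq> {..<n}"
  shows "eventually (\<lambda>s. S s \<subseteq> (\<Inter>t. \<Union>s\<in>{t..}. S s)) sequentially"
    and "j \<in> (\<Inter>t. \<Union>s\<in>{t..}. S s) \<longleftrightarrow> frequently (\<lambda>s. j \<in> S s) sequentially"
proof -
  show fr: "j \<in> (\<Inter>t. \<Union>s\<in>{t..}. S s) \<longleftrightarrow> frequently (\<lambda>s. j \<in> S s) sequentially" for j
    unfolding frequently_sequentially by auto
  define A where "A = (\<Inter>t. \<Union>s\<in>{t..}. S s)"
  have "\<forall>j\<in>{..<n} - A. eventually (\<lambda>s. j \<notin> S s) sequentially"
    using fr unfolding A_def by (simp add: not_frequently[symmetric])
  then have "eventually (\<lambda>s. \<forall>j\<in>{..<n} - A. j \<notin> S s) sequentially"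
    by (rule eventually_ball_finite[OF finite_Diff[OF finite_lessThan]])
  then show "eventually (\<lambda>s. S s \<subseteq> (\<Inter>t. \<Union>s\<in>{t..}. S s)) sequentially"
    unfolding A_def[symmetric]
    by (rule eventually_mono) (use assms in blast)
qed


lemma gossip_S_avg:
  assumes "j \<in> gossip_S n k X0 i1 i2 t"
  shows "gossip n k X0 i1 i2 (Suc t) (i1 t) j = gossip n k X0 i1 i2 (Suc t) (i2 t) j"
  using assms by (simp add: gossip_S_def Let_def)

locale gs =
  fixes m n k :: nat and X0 :: "nat \<Rightarrow> nat \<Rightarrow> real" and i1 i2 :: "nat \<Rightarrow> nat"
    and Xinf :: "nat \<Rightarrow> nat \<Rightarrow> real"
  assumes k1: "1 \<le> k" and kn: "k \<le> n"
    and tm: "\<forall>t. i1 t < m \<and> i2 t < m \<and> i1 t \<noteq> i2 t"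
    and conv: "\<forall>i<m. \<forall>j<n. (\<lambda>t. gossip n k X0 i1 i2 t i j) \<longlonglongrightarrow> Xinf i j"
begin

abbreviation "Y \<equiv> gossip n k X0 i1 i2"
definition "th i = kth n k (Xinf i)"
abbreviation "A c d \<equiv> S_inf n k X0 i1 i2 c d"
abbreviation "Sb c d s \<equiv> gossip_S n k X0 i1 i2 (beta i1 i2 c d s)"

context
  fixes c d assumes e: "{c, d} \<in> edges_inf i1 i2"
begin

lemma inf_e: "infinite {t. {i1 t, i2 t} = {c, d}}"
  using e unfolding edges_inf_def by simp

lemma cd_m: "c < m" "d < m"
proof -
  obtain t where "{i1 t, i2 t} = {c, d}" using not_finite_existsD[OF inf_e] by auto
  then show "c < m" "d < m" using tm by (auto simp: doubleton_eq_iff)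
qed

lemma beta_sm: "strict_mono (beta i1 i2 c d)"
  unfolding beta_def using inf_e by (rule strict_mono_enumerate)

lemma beta_in: "{i1 (beta i1 i2 c d s), i2 (beta i1 i2 c d s)} = {c, d}"
  using enumerate_in_set[OF inf_e] unfolding beta_def by simp

lemma Sb_eq: "Sb c d s = topk n k (Y (beta i1 i2 c d s) c) \<union> topk n k (Y (beta i1 i2 c d s) d)"
  using beta_in[of s] unfolding gossip_S_def by (auto simp: doubleton_eq_iff)

lemma Sb_sub: "Sb c d s \<subseteq> {..<n}"
  unfolding Sb_eq topk_eq by auto

lemma A_def': "A c d = (\<Inter>t. \<Union>s\<in>{t..}. Sb c d s)"
  unfolding S_inf_def by simp

lemma A_ev: "eventually (\<lambda>s. Sb c d s \<subseteq> A c d) sequentially"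
  unfolding A_def' by (rule A_char(1)) (use Sb_sub in blast)

lemma A_fr: "j \<in> A c d \<longleftrightarrow> frequently (\<lambda>s. j \<in> Sb c d s) sequentially"
  unfolding A_def' by (rule A_char(2)) (use Sb_sub in blast)

lemma A_sub: "A c d \<subseteq> {..<n}"
  unfolding A_def' using Sb_sub by blast

lemma ev_beta: "eventually P sequentially \<Longrightarrow> eventually (\<lambda>s. P (beta i1 i2 c d s)) sequentially"
  using filterlim_subseq[OF beta_sm] unfolding filterlim_iff by blast

lemma A_eq:
  assumes j: "j \<in> A c d"
  shows "Xinf c j = Xinf d j"
proof (rule ccontr)
  assume ne: "Xinf c j \<noteq> Xinf d j"
  have jn: "j < n" using j A_sub by blast
  let ?f = "\<lambda>s. Y (Suc (beta i1 i2 c d s)) c j - Y (Suc (beta i1 i2 c d s)) d j"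
  have l: "(\<lambda>t. Y (Suc t) i j) \<longlonglongrightarrow> Xinf i j" if "i < m" for i
    using conv that jn by (intro LIMSEQ_Suc) auto
  have "?f \<longlonglongrightarrow> Xinf c j - Xinf d j"
    using LIMSEQ_subseq_LIMSEQ[OF l[OF cd_m(1)] beta_sm] LIMSEQ_subseq_LIMSEQ[OF l[OF cd_m(2)] beta_sm]
    by (intro tendsto_diff) (auto simp: o_def)
  then have "eventually (\<lambda>s. ?f s \<noteq> 0) sequentially"
    by (rule tendsto_imp_eventually_ne) (use ne in simp)
  then obtain N where N: "\<And>s. s \<ge> N \<Longrightarrow> ?f s \<noteq> 0" unfolding eventually_sequentially by auto
  obtain s where s: "s \<ge> N" "j \<in> Sb c d s" using j unfolding A_fr frequently_sequentially by auto
  have "?f s = 0"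
    using gossip_S_avg[OF s(2)] beta_in[of s] by (auto simp: doubleton_eq_iff)
  then show False using N s by blast
qed

lemma conv_c: "\<forall>l<n. (\<lambda>t. Y t c l) \<longlonglongrightarrow> Xinf c l" and conv_d: "\<forall>l<n. (\<lambda>t. Y t d l) \<longlonglongrightarrow> Xinf d l"
  using conv cd_m by auto

lemma th_le: "th d \<le> th c"
proof (rule ccontr)
  assume lt: "\<not> th d \<le> th c"
  have "\<forall>l\<in>{..<n}. eventually (\<lambda>t. Xinf d l < th d \<longrightarrow> l \<notin> topk n k (Y t d)) sequentially"
  proof
    fix l assume l: "l \<in> {..<n}"
    show "eventually (\<lambda>t. Xinf d l < th d \<longrightarrow> l \<notin> topk n k (Y t d)) sequentially"
    proof (cases "Xinf d l < th d")
      case True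
      then show ?thesis using L2[OF k1 kn conv_d, of l] l unfolding th_def by (auto elim: eventually_mono)
    qed simp
  qed
  then have "eventually (\<lambda>t. \<forall>l\<in>{..<n}. Xinf d l < th d \<longrightarrow> l \<notin> topk n k (Y t d)) sequentially"
    by (rule eventually_ball_finite[OF finite_lessThan])
  from eventually_conj[OF ev_beta[OF this] A_ev] obtain N where
    "\<And>s. s \<ge> N \<Longrightarrow> (\<forall>l\<in>{..<n}. Xinf d l < th d \<longrightarrow> l \<notin> topk n k (Y (beta i1 i2 c d s) d)) \<and> Sb c d s \<subseteq> A c d"
    unfolding eventually_sequentially by blast
  then obtain s where
    s1: "\<forall>l\<in>{..<n}. Xinf d l < th d \<longrightarrow> l \<notin> topk n k (Y (beta i1 i2 c d s) d)"
    and s2: "Sb c d s \<subseteq> A c d" by blast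
  define T where "T = topk n k (Y (beta i1 i2 c d s) d)"
  have "T \<subseteq> {l \<in> {..<n}. th c < Xinf c l}"
  proof
    fix l assume l: "l \<in> T"
    then have ln: "l < n" unfolding T_def topk_eq by auto
    have "l \<in> A c d" using l s2 Sb_eq[of s] unfolding T_def by blast
    then have "Xinf c l = Xinf d l" by (rule A_eq)
    moreover have "\<not> Xinf d l < th d" using s1 l ln unfolding T_def by auto
    ultimately show "l \<in> {l \<in> {..<n}. th c < Xinf c l}" using lt ln by auto
  qed
  then have "card T \<le> card {l \<in> {..<n}. th c < Xinf c l}" by (intro card_mono) auto
  moreover have "k \<le> card T" unfolding T_def topk_eq by (rule kth_props(1)[OF k1 kn])
  moreover have "card {l \<in> {..<n}. th c < Xinf c l} < k" unfolding th_def by (rule kth_props(2)[OF k1 kn])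
  ultimately show False by simp
qed

lemma A_ge:
  assumes j: "j \<in> A c d" and le: "th c = th d"
  shows "th c \<le> Xinf c j"
proof (rule ccontr)
  assume "\<not> th c \<le> Xinf c j"
  then have lc: "Xinf c j < th c" and ld: "Xinf d j < th d" using A_eq[OF j] le by auto
  have jn: "j < n" using j A_sub by blast
  have "eventually (\<lambda>t. j \<notin> topk n k (Y t c) \<and> j \<notin> topk n k (Y t d)) sequentially"
    using L2[OF k1 kn conv_c jn] L2[OF k1 kn conv_d jn] lc ld unfolding th_def
    by (auto intro: eventually_conj)
  then have "eventually (\<lambda>s. j \<notin> Sb c d s) sequentially"
    by (rule ev_beta[THEN eventually_mono]) (simp add: Sb_eq)
  then show False using j unfolding A_fr by (simp add: not_frequently[symmetric])
qed

lemma A_prop: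
  assumes j: "j < n" "th c < Xinf c j"
  shows "j \<in> A c d"
proof -
  have "eventually (\<lambda>t. j \<in> topk n k (Y t c)) sequentially"
    using L1[OF k1 kn conv_c j(1)] j(2) unfolding th_def by auto
  then have "eventually (\<lambda>s. j \<in> Sb c d s) sequentially"
    by (rule ev_beta[THEN eventually_mono]) (simp add: Sb_eq)
  then show ?thesis unfolding A_fr by (rule eventually_frequently[rotated]) simp
qed

lemma A_ne: "A c d \<noteq> {}"
proof -
  obtain s where s: "Sb c d s \<subseteq> A c d" using A_ev eventually_happens' by fastforce
  have "k \<le> card (topk n k (Y (beta i1 i2 c d s) c))" unfolding topk_eq by (rule kth_props(1)[OF k1 kn])
  then have "topk n k (Y (beta i1 i2 c d s) c) \<noteq> {}" using k1 by auto
  then show ?thesis using s Sb_eq[of s] by blast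
qed

end

lemma th_const:
  assumes conn: "connected_graph m (edges_inf i1 i2)" and y: "y < m" and a: "a < m"
  shows "th y = th a"
proof -
  have "(a, y) \<in> ({(x, y). {x, y} \<in> edges_inf i1 i2})\<^sup>*"
    using conn y a unfolding connected_graph_def by blast
  then show ?thesis
  proof (induction rule: rtrancl_induct)
    case (step y z)
    then have e1: "{y, z} \<in> edges_inf i1 i2" by simp
    then have e2: "{z, y} \<in> edges_inf i1 i2" by (simp add: insert_commute)
    show ?case using th_le[OF e1] th_le[OF e2] step.IH by simp
  qed simp
qed

lemma main:
  assumes conn: "connected_graph m (edges_inf i1 i2)" and e: "{a, b} \<in> edges_inf i1 i2"
    and j: "j < n" "j \<notin> A a b" and i: "i < m"
  shows "Xinf i j \<le> (MIN j'\<in>A a b. Xinf a j')"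
proof (rule ccontr)
  assume "\<not> ?thesis"
  then have gt: "(MIN j'\<in>A a b. Xinf a j') < Xinf i j" by simp
  have fin: "finite (A a b)" using A_sub[OF e] finite_subset by blast
  obtain j0 where j0: "j0 \<in> A a b" "(MIN j'\<in>A a b. Xinf a j') = Xinf a j0"
  proof -
    have "(MIN j'\<in>A a b. Xinf a j') \<in> (\<lambda>j'. Xinf a j') ` A a b"
      by (rule Min_in) (use fin A_ne[OF e] in auto)
    then show ?thesis using that by auto
  qed
  have am: "a < m" using cd_m[OF e] by simp
  have tab: "th a = th b" using th_const[OF conn cd_m(2)[OF e] am] by simp
  have "th a \<le> Xinf a j0" using A_ge[OF e j0(1) tab] .
  then have gti: "th a < Xinf i j" using gt j0 by simp
  have "(i, a) \<in> ({(x, y). {x, y} \<in> edges_inf i1 i2})\<^sup>*"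
    using conn i am unfolding connected_graph_def by blast
  then have "a < m \<and> Xinf a j = Xinf i j"
  proof (induction rule: rtrancl_induct)
    case base
    then show ?case using i by simp
  next
    case (step y z)
    then have e1: "{y, z} \<in> edges_inf i1 i2" by simp
    have ym: "y < m" using step.IH by simp
    have "th y < Xinf y j" using step.IH gti th_const[OF conn ym am] by simp
    then have "j \<in> A y z" by (rule A_prop[OF e1 j(1)])
    then have "Xinf y j = Xinf z j" by (rule A_eq[OF e1])
    then show ?case using step.IH cd_m(2)[OF e1] by simp
  qed
  then have "th a < Xinf a j" using gti by simp
  then have "j \<in> A a b" by (rule A_prop[OF e j(1)])
  then show False using j(2) by simp
qed

end

theorem mainTheorem4:
  fixes m n k :: nat and X0 :: "nat \<Rightarrow> nat \<Rightarrow> real" and i1 i2 :: "nat \<Rightarrow> nat"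
    and Xinf :: "nat \<Rightarrow> nat \<Rightarrow> real" and a b :: nat
  assumes "m \<ge> 2" and "n \<ge> 1" and "1 \<le> k" and "k \<le> n"
    and "\<forall>t. i1 t < m \<and> i2 t < m \<and> i1 t \<noteq> i2 t"
    and "connected_graph m (edges_inf i1 i2)"
    and "\<forall>i<m. \<forall>j<n. (\<lambda>t. gossip n k X0 i1 i2 t i j) \<longlonglongrightarrow> Xinf i j"
    and "{a, b} \<in> edges_inf i1 i2"
  shows "\<forall>j<n. j \<notin> S_inf n k X0 i1 i2 a b \<longrightarrow>
           (\<forall>i<m. Xinf i j \<le> (MIN j'\<in>S_inf n k X0 i1 i2 a b. Xinf a j'))"
proof -
  interpret gs m n k X0 i1 i2 Xinf using assms by unfold_locales auto
  show ?thesis using main[OF assms(6) assms(8)] by blast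
qed

end
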